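(* Let $\mathsf X$ be a primitive cyclically reduced linear word in $\mathbb A_q$, and let $(i,j)$ and $(k,h)$ be linking pairs in $I(\mathsf X,\mathsf X)$ which are not equivalent under $\mathcal R(\mathsf X,\mathsf X)$. Let $p,q'$ be distinct positive integers with $p\ge3$ or $q'\ge3$. Then $\widehat{\mathsf X_i^p\mathsf X_j^{q'}}\neq\widehat{\mathsf X_k^p\mathsf X_h^{q'}}$.
   Context: Words. Fix $q\ge1$ and an alphabet $\mathbb A_q=\{a_1,\dots,a_q,\bar a_1,\dots,\bar a_q\}$ of $2q$ letters with a fixed linear order; set $\bar{\bar v}=v$. A linear word is a non-empty finite sequence $\mathsf V=v_0v_1\cdots v_{n-1}$ of letters, $n$ its length; subscripts are read modulo the length. $\bar{\mathsf V}=\bar v_{n-1}\cdots\bar v_0$. $\mathsf V$ is cyclically reduced if $v_i\ne\bar v_{i+1}$ for all $i$ (indices mod $n$). For an integer $j$, $\mathsf V_j=v_jv_{j+1}\cdots v_{n-1}v_0\cdots v_{j-1}$, and $\mathsf V_j^k$ means $(\mathsf V_j)^k$. Cyclic words are the equivalence classes of words under the equivalence generated by cyclic permutations and $\mathsf W\sim\mathsf Wv\bar v$ (conjugacy classes of the free group on $a_1,\dots,a_q$); $\widehat{\mathsf V}$ is the class of $\mathsf V$. A cyclically reduced word is primitive if it is not of the form $\mathsf U^r$ with $r\ge2$. Equivalence relation. For cyclically reduced $\mathsf V=v_0\cdots v_{n-1}$, $\mathsf W=w_0\cdots w_{m-1}$ let $I(\mathsf V,\mathsf W)=\{(j,k):0\le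 j<n,\,0\le k<m\}$ (entries read mod $n$ and mod $m$) and $\mathcal R(\mathsf V,\mathsf W)$ the equivalence relation generated by $(j,k)\sim(j+1,k+1)$ whenever $v_j=w_k$, and $(j+1,k)\sim(j,k+1)$ whenever $v_j=\bar w_k$. Sign. For reduced half-infinite words $\mathsf T=t_0t_1\cdots$, $\mathsf U=u_0u_1\cdots$, $\mathsf T<\mathsf U$ if $t_0<u_0$, or if for some $j\ge0$, $t_i=u_i$ for $0\le i\le j$ and $t_{j+1}$ precedes $u_{j+1}$ in the order obtained by cyclically permuting the order of $\mathbb A_q$ so that $\bar t_j$ is first. $\mathsf V^{\infty}=\mathsf V\mathsf V\cdots$, $\mathsf V^{-\infty}=\bar{\mathsf V}\bar{\mathsf V}\cdots$. A 4-tuple is cyclically ordered if some cyclic permutation of it is strictly increasing. $\mathsf s_{\mathsf V,\mathsf W}(i,j)=1$ if $(\mathsf V_i^\infty,\mathsf W_j^\infty,\mathsf V_i^{-\infty},\mathsf W_j^{-\infty})$ is cyclically ordered, $-1$ if $(\mathsf V_i^\infty,\mathsf W_j^{-\infty},\mathsf V_i^{-\infty},\mathsf W_j^{\infty})$ is cyclically ordered, $0$ otherwise. A pair $(i,j)\in I(\mathsf V,\mathsf W)$ is a linking pair if $\mathsf s_{\mathsf V,\mathsf W}(i,j)\neq0$. *)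

theory Defs
  imports Main
begin

text \<open>Letters: (i, False) is a_i, (i, True) is the inverse letter of a_i.\<close>
type_synonym letter = "nat \<times> bool"

definition alphabet :: "nat \<Rightarrow> letter set" where
  "alphabet q = {(i, b). 1 \<le> i \<and> i \<le> q}"

definition bar :: "letter \<Rightarrow> letter" where
  "bar v = (fst v, \<not> snd v)"

text \<open>The fixed linear order of the alphabet is given by a list enumerating it.\<close>
definition valid_order :: "nat \<Rightarrow> letter list \<Rightarrow> bool" where
  "valid_order q ord \<longleftrightarrow> distinct ord \<and> set ord = alphabet q"

definition idx :: "letter list \<Rightarrow> letter \<Rightarrow> nat" where
  "idx ord x = (LEAST i. i < length ord \<and> ord ! i = x)"

text \<open>Rank of x in the order cyclically permuted so that c comes first.\<close>
definition rk :: "letter list \<Rightarrow> letter \<Rightarrow> letter \<Rightarrow> nat" where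
  "rk ord c x = (idx ord x + length ord - idx ord c) mod length ord"

definition word_bar :: "letter list \<Rightarrow> letter list" where
  "word_bar V = rev (map bar V)"

definition wpow :: "letter list \<Rightarrow> nat \<Rightarrow> letter list" where
  "wpow V k = concat (replicate k V)"

definition cyc_reduced :: "letter list \<Rightarrow> bool" where
  "cyc_reduced V \<longleftrightarrow> V \<noteq> [] \<and>
     (\<forall>i < length V. V ! i \<noteq> bar (V ! ((i + 1) mod length V)))"

definition primitive :: "letter list \<Rightarrow> bool" where
  "primitive V \<longleftrightarrow> cyc_reduced V \<and> \<not> (\<exists>U r. r \<ge> 2 \<and> V = wpow U r)"

definition inf_pow :: "letter list \<Rightarrow> nat \<Rightarrow> letter" where
  "inf_pow V n = V ! (n mod length V)"

definition neg_inf_pow :: "letter list \<Rightarrow> nat \<Rightarrow> letter" where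
  "neg_inf_pow V = inf_pow (word_bar V)"

definition hless :: "letter list \<Rightarrow> (nat \<Rightarrow> letter) \<Rightarrow> (nat \<Rightarrow> letter) \<Rightarrow> bool" where
  "hless ord T U \<longleftrightarrow> idx ord (T 0) < idx ord (U 0) \<or>
     (\<exists>j. (\<forall>i \<le> j. T i = U i) \<and>
          rk ord (bar (T j)) (T (Suc j)) < rk ord (bar (T j)) (U (Suc j)))"

definition cyc_ordered :: "letter list \<Rightarrow> (nat \<Rightarrow> letter) \<Rightarrow> (nat \<Rightarrow> letter) \<Rightarrow>
    (nat \<Rightarrow> letter) \<Rightarrow> (nat \<Rightarrow> letter) \<Rightarrow> bool" where
  "cyc_ordered ord a b c d \<longleftrightarrow>
     (hless ord a b \<and> hless ord b c \<and> hless ord c d) \<or>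
     (hless ord b c \<and> hless ord c d \<and> hless ord d a) \<or>
     (hless ord c d \<and> hless ord d a \<and> hless ord a b) \<or>
     (hless ord d a \<and> hless ord a b \<and> hless ord b c)"

definition sgn_pair :: "letter list \<Rightarrow> letter list \<Rightarrow> letter list \<Rightarrow> nat \<Rightarrow> nat \<Rightarrow> int" where
  "sgn_pair ord V W i j =
     (if cyc_ordered ord (inf_pow (rotate i V)) (inf_pow (rotate j W))
                         (neg_inf_pow (rotate i V)) (neg_inf_pow (rotate j W)) then 1
      else if cyc_ordered ord (inf_pow (rotate i V)) (neg_inf_pow (rotate j W))
                         (neg_inf_pow (rotate i V)) (inf_pow (rotate j W)) then -1
      else 0)"

definition linking_pair :: "letter list \<Rightarrow> letter list \<Rightarrow> letter list \<Rightarrow> nat \<times> nat \<Rightarrow> bool" where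
  "linking_pair ord V W ij \<longleftrightarrow> fst ij < length V \<and> snd ij < length W \<and>
     sgn_pair ord V W (fst ij) (snd ij) \<noteq> 0"

inductive R_step :: "letter list \<Rightarrow> letter list \<Rightarrow> nat \<times> nat \<Rightarrow> nat \<times> nat \<Rightarrow> bool"
  for V W where
  diag: "\<lbrakk> j < length V; k < length W; V ! j = W ! k \<rbrakk> \<Longrightarrow>
     R_step V W (j, k) ((j + 1) mod length V, (k + 1) mod length W)"
| anti: "\<lbrakk> j < length V; k < length W; V ! j = bar (W ! k) \<rbrakk> \<Longrightarrow>
     R_step V W ((j + 1) mod length V, k) (j, (k + 1) mod length W)"

definition R_equiv :: "letter list \<Rightarrow> letter list \<Rightarrow> nat \<times> nat \<Rightarrow> nat \<times> nat \<Rightarrow> bool" where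
  "R_equiv V W = (symclp (R_step V W))\<^sup>*\<^sup>*"

text \<open>Cyclic words: equivalence generated by cyclic permutation and W ~ W v vbar.\<close>
inductive cyc_step :: "nat \<Rightarrow> letter list \<Rightarrow> letter list \<Rightarrow> bool" for q where
  rot: "cyc_step q (x # xs) (xs @ [x])"
| ins: "\<lbrakk> W \<noteq> []; v \<in> alphabet q \<rbrakk> \<Longrightarrow> cyc_step q W (W @ [v, bar v])"

definition same_cyclic_word :: "nat \<Rightarrow> letter list \<Rightarrow> letter list \<Rightarrow> bool" where
  "same_cyclic_word q = (symclp (cyc_step q))\<^sup>*\<^sup>*"

end

theory Submission
  imports Defs
begin


lemma bar_bar[simp]: "bar (bar v) = v" by (simp add: bar_def)
lemma bar_neq[simp]: "bar v \<noteq> v" "v \<noteq> bar v" by (auto simp: bar_def prod_eq_iff)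
lemma bar_eq_iff: "(bar a = b) = (a = bar b)" by (auto simp: bar_def prod_eq_iff)

fun reduced :: "letter list \<Rightarrow> bool" where
  "reduced (a # b # l) = (b \<noteq> bar a \<and> reduced (b # l))"
| "reduced _ = True"

definition consL :: "letter \<Rightarrow> letter list \<Rightarrow> letter list" where
  "consL x l = (case l of [] \<Rightarrow> [x] | y # ys \<Rightarrow> if y = bar x then ys else x # l)"

definition snocR :: "letter list \<Rightarrow> letter \<Rightarrow> letter list" where
  "snocR l x = (if l \<noteq> [] \<and> last l = bar x then butlast l else l @ [x])"

definition red :: "letter list \<Rightarrow> letter list" where
  "red W = foldr consL W []"

fun cr :: "letter list \<Rightarrow> letter list" where
  "cr [] = []"
| "cr (a # l) = (if l \<noteq> [] \<and> a = bar (last l) then cr (butlast l) else a # l)"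

lemma red_Cons[simp]: "red (x # xs) = consL x (red xs)" by (simp add: red_def)
lemma red_Nil[simp]: "red [] = []" by (simp add: red_def)

lemma reduced_tl: "reduced (a # l) \<Longrightarrow> reduced l"
  by (cases l) auto

lemma reduced_consL: "reduced l \<Longrightarrow> reduced (consL x l)"
  by (cases l) (auto simp: consL_def dest: reduced_tl)

lemma reduced_red: "reduced (red W)"
  by (induction W) (auto intro: reduced_consL)

lemma comm: "consL y (snocR l x) = snocR (consL y l) x"
proof (cases l rule: rev_cases)
  case Nil then show ?thesis by (auto simp: consL_def snocR_def bar_eq_iff)
next
  case (snoc m w)
  show ?thesis
  proof (cases m)
    case Nil then show ?thesis using snoc by (auto simp: consL_def snocR_def bar_eq_iff)
  next
    case (Cons z m') then show ?thesis using snoc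
      by (auto simp: consL_def snocR_def split: list.splits)
  qed
qed

lemma red_snoc: "red (xs @ [x]) = snocR (red xs) x"
proof (induction xs)
  case Nil then show ?case by (simp add: consL_def snocR_def)
next
  case (Cons y xs) then show ?case by (simp add: comm)
qed

lemma reduced_snoc2: "reduced (m @ [u, w]) \<Longrightarrow> w \<noteq> bar u"
  by (induction m rule: reduced.induct) auto

lemma snocR_snocR: "reduced l \<Longrightarrow> snocR (snocR l v) (bar v) = l"
proof (cases l rule: rev_cases)
  case Nil then show ?thesis by (auto simp: snocR_def)
next
  case (snoc m w)
  assume r: "reduced l"
  show ?thesis
  proof (cases "w = bar v")
    case True
    show ?thesis
    proof (cases m rule: rev_cases)
      case Nil then show ?thesis using snoc True by (auto simp: snocR_def)
    next
      case (snoc m' u)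
      have "w \<noteq> bar u" using r \<open>l = m @ [w]\<close> snoc reduced_snoc2[of m' u w] by auto
      then show ?thesis using snoc True \<open>l = m @ [w]\<close> by (auto simp: snocR_def bar_eq_iff butlast_append)
    qed
  next
    case False then show ?thesis using snoc by (auto simp: snocR_def butlast_append)
  qed
qed

lemma red_cancel: "red (W @ [v, bar v]) = red W"
proof -
  have "red (W @ [v, bar v]) = red ((W @ [v]) @ [bar v])" by simp
  also have "\<dots> = snocR (snocR (red W) v) (bar v)" by (simp only: red_snoc)
  also have "\<dots> = red W" by (rule snocR_snocR[OF reduced_red])
  finally show ?thesis .
qed

definition rel :: "letter list \<Rightarrow> letter list \<Rightarrow> bool" where
  "rel a b \<longleftrightarrow> (\<exists>k. b = rotate k a)"

lemma rel_refl[simp]: "rel a a" unfolding rel_def by (rule exI[of _ 0]) simp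

lemma rel_trans: "rel a b \<Longrightarrow> rel b c \<Longrightarrow> rel a c"
  unfolding rel_def by (auto simp: rotate_rotate)

lemma rel_sym: "rel a b \<Longrightarrow> rel b a"
  unfolding rel_def
proof (elim exE)
  fix k assume b: "b = rotate k a"
  show "\<exists>k. a = rotate k b"
  proof (cases "length a")
    case 0 then show ?thesis using b by auto
  next
    case (Suc m)
    have "rotate (m * k) b = rotate (length a * k) a" using b Suc by (simp add: rotate_rotate algebra_simps)
    also have "\<dots> = a" by (subst rotate_conv_mod) simp
    finally show ?thesis by metis
  qed
qed

lemma cr_fix: "l = [] \<or> length l = 1 \<or> hd l \<noteq> bar (last l) \<Longrightarrow> cr l = l"
  by (cases l) auto

lemma cr_strip: "cr (a # m @ [bar a]) = cr m" by simp

lemma rel_rot1: "rel (x # l) (l @ [x])"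
  unfolding rel_def by (rule exI[of _ 1]) simp

lemma reduced_hd2: "reduced (a # b # l) \<Longrightarrow> b \<noteq> bar a" by simp

lemma reduced_last2: "reduced (m @ [u, w]) \<Longrightarrow> w \<noteq> bar u" by (rule reduced_snoc2)

lemma key_rot: "reduced l \<Longrightarrow> rel (cr (consL x l)) (cr (snocR l x))"
proof (cases l rule: rev_cases)
  case Nil then show ?thesis by (simp add: consL_def snocR_def)
next
  case (snoc m w)
  assume r: "reduced l"
  show ?thesis
  proof (cases m)
    case Nil
    show ?thesis
    proof (cases "w = bar x")
      case True then show ?thesis using snoc Nil by (simp add: consL_def snocR_def)
    next
      case False
      have "cr [x, w] = [x, w]" using False by (auto simp: bar_eq_iff)
      moreover have "cr [w, x] = [w, x]" using False by (auto simp: bar_eq_iff)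
      ultimately show ?thesis using snoc Nil False rel_rot1[of x "[w]"] by (simp add: consL_def snocR_def)
    qed
  next
    case (Cons z m')
    have l: "l = z # m' @ [w]" using snoc Cons by simp
    have cl: "consL x l = (if z = bar x then m' @ [w] else x # z # m' @ [w])"
      using l by (simp add: consL_def)
    have sl: "snocR l x = (if w = bar x then z # m' else z # m' @ [w, x])"
      using l by (simp add: snocR_def butlast_append)
    show ?thesis
    proof (cases "z = bar x")
      case zt: True
      show ?thesis
      proof (cases "w = bar x")
        case wt: True
        have e1: "cr (m' @ [w]) = m' @ [w]"
        proof (cases m')
          case Nil then show ?thesis by simp
        next
          case (Cons y m'')
          have "y \<noteq> bar z" using r l Cons by simp
          then show ?thesis using Cons zt wt by (auto simp: bar_eq_iff)
        qed
        have e2: "cr (z # m') = z # m'"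
        proof (cases m' rule: rev_cases)
          case Nil then show ?thesis by simp
        next
          case (snoc m'' y)
          have "w \<noteq> bar y" using r l snoc reduced_snoc2[of "z # m''" y w] by simp
          then show ?thesis using snoc zt wt by (auto simp: bar_eq_iff)
        qed
        show ?thesis using cl sl zt wt e1 e2 rel_rot1[of z m'] rel_sym by simp
      next
        case wf: False
        have "z # m' @ [w, x] = bar x # (m' @ [w]) @ [bar (bar x)]" using zt by simp
        then have "cr (z # m' @ [w, x]) = cr (m' @ [w])" by (metis cr_strip)
        then show ?thesis using cl sl zt wf by simp
      qed
    next
      case zf: False
      show ?thesis
      proof (cases "w = bar x")
        case wt: True
        have "x # z # m' @ [w] = x # (z # m') @ [bar x]" using wt by simp
        then have "cr (x # z # m' @ [w]) = cr (z # m')" by (metis cr_strip)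
        then show ?thesis using cl sl zf wt by simp
      next
        case wf: False
        have e1: "cr (x # z # m' @ [w]) = x # z # m' @ [w]"
          using wf by (intro cr_fix) (auto simp: bar_eq_iff)
        have e2: "cr (z # m' @ [w, x]) = z # m' @ [w, x]"
          using zf by (intro cr_fix) (auto simp: bar_eq_iff)
        show ?thesis using cl sl zf wf e1 e2 rel_rot1[of x "z # m' @ [w]"] by simp
      qed
    qed
  qed
qed

definition FI :: "letter list \<Rightarrow> letter list" where
  "FI W = cr (red W)"

lemma FI_rot: "rel (FI (x # xs)) (FI (xs @ [x]))"
  unfolding FI_def by (simp add: red_snoc key_rot reduced_red)

lemma FI_cancel: "FI (W @ [v, bar v]) = FI W"
  unfolding FI_def by (simp add: red_cancel)

lemma FI_step: "cyc_step q W W' \<Longrightarrow> rel (FI W) (FI W')"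
  by (induction rule: cyc_step.induct) (auto simp: FI_rot FI_cancel)

lemma FI_same: "same_cyclic_word q W W' \<Longrightarrow> rel (FI W) (FI W')"
  unfolding same_cyclic_word_def
proof (induction rule: rtranclp_induct)
  case base then show ?case by simp
next
  case (step y z)
  then show ?case by (auto elim!: symclpE intro: rel_trans[OF _ rel_sym] rel_trans FI_step)
qed

lemma FI_swap: "rel (FI (u @ w)) (FI (w @ u))"
proof (induction u arbitrary: w)
  case Nil then show ?case by simp
next
  case (Cons y u)
  have "rel (FI ((y # u) @ w)) (FI ((u @ w) @ [y]))" using FI_rot[of y "u @ w"] by simp
  moreover have "rel (FI (u @ (w @ [y]))) (FI ((w @ [y]) @ u))" by (rule Cons)
  ultimately show ?case by (auto intro: rel_trans)
qed

lemma red_cancel_block: "red (Z @ T @ word_bar T) = red Z"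
proof (induction T arbitrary: Z)
  case Nil then show ?case by (simp add: word_bar_def)
next
  case (Cons t T)
  have "Z @ (t # T) @ word_bar (t # T) = ((Z @ [t]) @ T @ word_bar T) @ [bar t]"
    by (simp add: word_bar_def)
  then have "red (Z @ (t # T) @ word_bar (t # T)) = snocR (red ((Z @ [t]) @ T @ word_bar T)) (bar t)"
    by (simp only: red_snoc)
  also have "\<dots> = snocR (snocR (red Z) t) (bar t)"
    using Cons.IH[of "Z @ [t]"] by (simp only: red_snoc)
  also have "\<dots> = red Z" by (rule snocR_snocR[OF reduced_red])
  finally show ?case .
qed

lemma FI_cancel_block: "rel (FI (u @ T @ word_bar T @ w)) (FI (u @ w))"
proof -
  have "rel (FI (u @ T @ word_bar T @ w)) (FI (w @ u @ T @ word_bar T))"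
    using FI_swap[of "u @ T @ word_bar T" w] by simp
  moreover have "FI (w @ u @ T @ word_bar T) = FI (w @ u)"
    using red_cancel_block[of "w @ u" T] by (simp add: FI_def)
  moreover have "rel (FI (w @ u)) (FI (u @ w))" by (rule FI_swap)
  ultimately show ?thesis by (auto intro: rel_trans)
qed

lemma red_fix: "reduced l \<Longrightarrow> red l = l"
proof (induction l)
  case Nil then show ?case by simp
next
  case (Cons a l)
  then have "red l = l" using reduced_tl by blast
  then show ?case using Cons.prems by (cases l) (auto simp: consL_def)
qed

lemma FI_fix: "reduced l \<Longrightarrow> l = [] \<or> hd l \<noteq> bar (last l) \<Longrightarrow> FI l = l"
  unfolding FI_def by (simp add: red_fix, rule cr_fix) auto




locale pw =
  fixes X :: "letter list"
  assumes prim: "primitive X"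
begin

abbreviation n where "n \<equiv> length X"

definition x :: "int \<Rightarrow> letter" where
  "x t = X ! nat (t mod int n)"

definition seg :: "int \<Rightarrow> nat \<Rightarrow> letter list" where
  "seg a L = map (\<lambda>u. x (a + int u)) [0..<L]"

lemma cycr: "cyc_reduced X" using prim by (simp add: primitive_def)

lemma n_pos: "n > 0" using cycr by (simp add: cyc_reduced_def)

lemma x_cong: "a mod int n = b mod int n \<Longrightarrow> x a = x b"
  by (simp add: x_def)

lemma x_add_n[simp]: "x (t + int n) = x t"
  by (rule x_cong) simp

lemma x_add_mult: "x (t + int n * k) = x t"
  by (rule x_cong) simp

lemma x_nat: "i < n \<Longrightarrow> x (int i) = X ! i"
  by (simp add: x_def)

lemma seg_length[simp]: "length (seg a L) = L" by (simp add: seg_def)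

lemma seg_nth[simp]: "u < L \<Longrightarrow> seg a L ! u = x (a + int u)" by (simp add: seg_def)

lemma seg_append: "seg a (L1 + L2) = seg a L1 @ seg (a + int L1) L2"
  by (rule nth_equalityI) (auto simp: nth_append algebra_simps)

lemma seg_cong: "a mod int n = b mod int n \<Longrightarrow> seg a L = seg b L"
proof (rule nth_equalityI)
  fix u assume "a mod int n = b mod int n" "u < length (seg a L)"
  then have "(a + int u) mod int n = (b + int u) mod int n" by (metis mod_add_left_eq)
  then show "seg a L ! u = seg b L ! u" using \<open>u < length (seg a L)\<close> by (auto intro!: x_cong)
qed simp

lemma seg_add_n: "seg (a + int n * k) L = seg a L"
  by (rule seg_cong) simp

lemma cyc1: "x t \<noteq> bar (x (t + 1))"
proof -
  let ?i = "nat (t mod int n)"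
  have i: "?i < n" using n_pos by (simp add: nat_less_iff)
  have "X ! ?i \<noteq> bar (X ! ((?i + 1) mod n))" using cycr i by (simp add: cyc_reduced_def)
  moreover have "x t = X ! ?i" by (simp add: x_def)
  moreover have "x (t + 1) = X ! ((?i + 1) mod n)"
  proof -
    have "int ((?i + 1) mod n) = (int ?i + 1) mod int n" by (simp only: zmod_int of_nat_add of_nat_1)
    also have "\<dots> = (t mod int n + 1) mod int n"
    proof -
      have ii: "int ?i = t mod int n" using n_pos by simp
      show ?thesis by (simp only: ii)
    qed
    also have "\<dots> = (t + 1) mod int n" by (simp add: mod_add_left_eq)
    finally have "int ((?i + 1) mod n) = (t + 1) mod int n" .
    then show ?thesis unfolding x_def by (metis nat_int)
  qed
  ultimately show ?thesis by simp
qed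

lemma cyc2: "x (t + 1) \<noteq> bar (x t)"
  using cyc1[of t] by (auto simp: bar_eq_iff)

lemma rotate_seg: "rotate i X = seg (int i) n"
proof (rule nth_equalityI)
  fix u assume "u < length (rotate i X)"
  then have u: "u < n" by simp
  have "nat ((int i + int u) mod int n) = (u + i) mod n"
    by (metis add.commute nat_int of_nat_add zmod_int)
  then show "rotate i X ! u = seg (int i) n ! u" using u n_pos by (simp add: nth_rotate x_def add.commute)
qed simp

lemma wpow_seg: "wpow (seg a n) p = seg a (p * n)"
proof (induction p)
  case 0 then show ?case by (simp add: wpow_def seg_def)
next
  case (Suc p)
  have "seg a (Suc p * n) = seg a (n + p * n)" by simp
  also have "\<dots> = seg a n @ seg (a + int n) (p * n)" by (rule seg_append)
  also have "\<dots> = seg a n @ seg a (p * n)" using seg_add_n[of a 1] by simp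
  finally show ?case using Suc by (simp add: wpow_def)
qed


lemma prim_shift:
  assumes sh: "\<And>t. x (t + int k) = x t" and k: "0 < k" "k < n"
  shows False
proof -
  have r: "rotate k X = X"
  proof -
    have "seg (int k) n = seg 0 n"
      by (rule nth_equalityI) (auto simp: sh[of "int _", simplified add.commute])
    then show ?thesis using rotate_seg[of k] rotate_seg[of 0] by simp
  qed
  have "rotate k X = drop k X @ take k X" using k by (simp add: rotate_drop_take)
  then have e: "take k X @ drop k X = drop k X @ take k X" using r by simp
  have "take k X \<noteq> []" "drop k X \<noteq> []" using k by auto
  from comm_append_is_replicate[OF this e]
  obtain m zs where "m > 1" "concat (replicate m zs) = take k X @ drop k X" by blast
  then have "X = wpow zs m" "m \<ge> 2" using e by (auto simp: wpow_def)
  then show False using prim by (auto simp: primitive_def)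
qed

lemma prim_seg:
  assumes eq: "\<And>u. u < n \<Longrightarrow> x (a + int u) = x (b + int u)"
  shows "a mod int n = b mod int n"
proof -
  define k where "k = nat ((b - a) mod int n)"
  have kk: "int k = (b - a) mod int n" using n_pos by (simp add: k_def)
  have sh: "x (t + int k) = x t" for t
  proof -
    define u where "u = nat ((t - a) mod int n)"
    have uu: "int u = (t - a) mod int n" using n_pos by (simp add: u_def)
    have un: "u < n" using n_pos by (simp add: u_def nat_less_iff)
    have "x t = x (a + int u)"
      by (rule x_cong) (simp add: uu mod_add_right_eq)
    also have "\<dots> = x (b + int u)" using eq un by simp
    also have "\<dots> = x (t + int k)"
    proof (rule x_cong)
      have "(b + int u) mod int n = (b + (t - a)) mod int n" by (simp add: uu mod_add_right_eq)
      moreover have "(t + int k) mod int n = (t + (b - a)) mod int n" by (simp add: kk mod_add_right_eq)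
      ultimately show "(b + int u) mod int n = (t + int k) mod int n" by (simp add: algebra_simps)
    qed
    finally show ?thesis by simp
  qed
  have "k < n" using n_pos by (simp add: k_def nat_less_iff)
  show ?thesis
  proof (cases "k = 0")
    case True
    then have "(b - a) mod int n = 0" using kk by simp
    then have "int n dvd b - a" by (simp add: dvd_eq_mod_eq_0)
    then show ?thesis by (simp add: mod_eq_dvd_iff dvd_diff_commute)
  next
    case False
    then show ?thesis using prim_shift[OF sh] \<open>k < n\<close> by simp
  qed
qed

lemma prim_seg2:
  assumes "seg a L = seg b L" "L \<ge> n"
  shows "a mod int n = b mod int n"
proof (rule prim_seg)
  fix u assume "u < n"
  then have "seg a L ! u = seg b L ! u" using assms by simp
  then show "x (a + int u) = x (b + int u)" using \<open>u < n\<close> assms(2) by simp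
qed

definition A :: "int \<Rightarrow> int \<Rightarrow> nat \<Rightarrow> bool" where
  "A i j m \<longleftrightarrow> (\<forall>t<m. x (j + int t) = bar (x (i - 1 - int t)))"

lemma A_iff: "A i j m \<longleftrightarrow> seg j m = word_bar (seg (i - int m) m)"
proof -
  have "word_bar (seg (i - int m) m) ! t = bar (x (i - 1 - int t))" if "t < m" for t
    using that by (simp add: word_bar_def rev_nth of_nat_diff algebra_simps)
  then show ?thesis unfolding A_def
    by (auto simp: list_eq_iff_nth_eq word_bar_def)
qed

lemma noinv:
  assumes "A i j m" "m \<ge> n"
  shows False
proof -
  define c where "c = i + j - 1"
  have all: "x y = bar (x (c - y))" for y
  proof -
    define t where "t = nat ((y - j) mod int n)"
    have tt: "int t = (y - j) mod int n" using n_pos by (simp add: t_def)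
    have "t < n" using n_pos by (simp add: t_def nat_less_iff)
    then have tn: "t < m" using assms(2) by simp
    have "x y = x (j + int t)" by (rule x_cong) (simp add: tt mod_add_right_eq)
    also have "\<dots> = bar (x (i - 1 - int t))" using assms(1) tn by (simp add: A_def)
    also have "x (i - 1 - int t) = x (c - y)"
    proof (rule x_cong)
      have "(i - 1 - int t) mod int n = (i - 1 - (y - j)) mod int n" by (simp add: tt mod_diff_right_eq)
      then show "(i - 1 - int t) mod int n = (c - y) mod int n" by (simp add: c_def algebra_simps)
    qed
    finally show ?thesis .
  qed
  show False
  proof (cases "even c")
    case True
    then have h: "c - c div 2 = c div 2" by presburger
    show False using all[of "c div 2"] unfolding h by (metis bar_neq(2))
  next
    case False
    then have h: "c - c div 2 = c div 2 + 1" by presburger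
    show False using all[of "c div 2"] cyc1[of "c div 2"] unfolding h by simp
  qed
qed

definition Req :: "int \<times> int \<Rightarrow> int \<times> int \<Rightarrow> bool" where
  "Req a b \<longleftrightarrow> R_equiv X X (nat (fst a mod int n), nat (snd a mod int n))
                              (nat (fst b mod int n), nat (snd b mod int n))"

lemma R_equiv_sym: "R_equiv V W a b \<Longrightarrow> R_equiv V W b a"
  unfolding R_equiv_def
proof (induction rule: rtranclp_induct)
  case base then show ?case by simp
next
  case (step y z)
  then have "symclp (R_step V W) z y" by (auto simp: symclp_def)
  then show ?case using step(3) by (rule converse_rtranclp_into_rtranclp)
qed

lemma Req_refl[simp]: "Req a a" by (simp add: Req_def R_equiv_def)
lemma Req_sym: "Req a b \<Longrightarrow> Req b a" by (simp add: Req_def R_equiv_sym)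
lemma Req_trans: "Req a b \<Longrightarrow> Req b c \<Longrightarrow> Req a c"
  unfolding Req_def R_equiv_def by (rule rtranclp_trans)

lemma Req_cong: "fst a mod int n = fst a' mod int n \<Longrightarrow> snd a mod int n = snd a' mod int n \<Longrightarrow>
   fst b mod int n = fst b' mod int n \<Longrightarrow> snd b mod int n = snd b' mod int n \<Longrightarrow> Req a b = Req a' b'"
  by (simp add: Req_def)

lemma nat_mod_suc: "Suc (nat (a mod int n)) mod n = nat ((a + 1) mod int n)"
proof -
  have "int ((nat (a mod int n) + 1) mod n) = (int (nat (a mod int n)) + 1) mod int n"
    by (simp only: zmod_int of_nat_add of_nat_1)
  also have "\<dots> = (a mod int n + 1) mod int n"
  proof -
    have ii: "int (nat (a mod int n)) = a mod int n" using n_pos by simp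
    show ?thesis by (simp only: ii)
  qed
  also have "\<dots> = (a + 1) mod int n" by (simp add: mod_add_left_eq)
  finally have "int ((nat (a mod int n) + 1) mod n) = (a + 1) mod int n" .
  then show ?thesis by (metis Suc_eq_plus1 nat_int)
qed

lemma x_def2: "x a = X ! nat (a mod int n)" by (simp add: x_def)

lemma nat_mod_lt: "nat (a mod int n) < n" using n_pos by (simp add: nat_less_iff)

lemma Req_diag: "x a = x b \<Longrightarrow> Req (a, b) (a + 1, b + 1)"
proof -
  assume e: "x a = x b"
  have "R_step X X (nat (a mod int n), nat (b mod int n))
     ((nat (a mod int n) + 1) mod n, (nat (b mod int n) + 1) mod n)"
    using e by (intro R_step.diag nat_mod_lt) (simp add: x_def2)
  then show ?thesis unfolding Req_def R_equiv_def by (auto intro!: r_into_rtranclp simp: symclp_def nat_mod_suc)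
qed

lemma Req_anti: "x a = bar (x b) \<Longrightarrow> Req (a + 1, b) (a, b + 1)"
proof -
  assume e: "x a = bar (x b)"
  have "R_step X X ((nat (a mod int n) + 1) mod n, nat (b mod int n))
     (nat (a mod int n), (nat (b mod int n) + 1) mod n)"
    using e by (intro R_step.anti nat_mod_lt) (simp add: x_def2)
  then show ?thesis unfolding Req_def R_equiv_def by (auto intro!: r_into_rtranclp simp: symclp_def nat_mod_suc)
qed

lemma R_step_swap: "R_step X X a b \<Longrightarrow> symclp (R_step X X) (snd a, fst a) (snd b, fst b)"
proof (induction rule: R_step.induct)
  case (diag j k)
  then show ?case using R_step.diag[where j=k and k=j] by (simp add: symclp_def)
next
  case (anti j k)
  then show ?case using R_step.anti[where j=k and k=j] by (simp add: symclp_def bar_eq_iff)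
qed

lemma R_equiv_swap: "R_equiv X X a b \<Longrightarrow> R_equiv X X (snd a, fst a) (snd b, fst b)"
  unfolding R_equiv_def
proof (induction rule: rtranclp_induct)
  case base then show ?case by simp
next
  case (step y z)
  have "symclp (R_step X X) (snd y, fst y) (snd z, fst z)"
    using step(2) by (auto simp: symclp_def dest: R_step_swap)
  with step(3) show ?case by (rule rtranclp.rtrancl_into_rtrancl)
qed

lemma Req_swap: "Req (a, b) (c, d) \<Longrightarrow> Req (b, a) (d, c)"
  unfolding Req_def using R_equiv_swap by fastforce

lemma Req_diag_chain: "(\<And>u. u < s \<Longrightarrow> x (a + int u) = x (b + int u)) \<Longrightarrow> Req (a, b) (a + int s, b + int s)"
proof (induction s)
  case 0 then show ?case by simp
next
  case (Suc s)
  then have "Req (a, b) (a + int s, b + int s)" by simp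
  moreover have "Req (a + int s, b + int s) (a + int s + 1, b + int s + 1)"
    using Suc.prems[of s] by (intro Req_diag) simp
  ultimately show ?case by (auto intro: Req_trans simp: algebra_simps)
qed

lemma Req_anti_chain: "(\<And>u. u < s \<Longrightarrow> x (a + int u) = bar (x (b - 1 - int u))) \<Longrightarrow> Req (a, b) (a + int s, b - int s)"
proof (induction s)
  case 0 then show ?case by simp
next
  case (Suc s)
  then have "Req (a, b) (a + int s, b - int s)" by simp
  moreover have "Req (a + int s + 1, b - int s - 1) (a + int s, b - int s - 1 + 1)"
    using Suc.prems[of s] by (intro Req_anti) (simp add: algebra_simps)
  ultimately show ?case by (auto intro: Req_trans Req_sym simp: algebra_simps)
qed

end



context pw begin

definition CC :: "nat \<Rightarrow> nat \<Rightarrow> int \<Rightarrow> int \<Rightarrow> nat \<Rightarrow> letter list" where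
  "CC p q' \<phi> \<psi> d = seg \<phi> (p * n - d) @ seg (\<psi> + int d) (q' * n - d)"

lemma CC_len: "length (CC p q' \<phi> \<psi> d) = (p * n - d) + (q' * n - d)"
  by (simp add: CC_def)

lemma CC_nth1: "t < p * n - d \<Longrightarrow> CC p q' \<phi> \<psi> d ! t = x (\<phi> + int t)"
  by (simp add: CC_def nth_append)

lemma CC_nth2: "p * n - d \<le> t \<Longrightarrow> t < (p * n - d) + (q' * n - d) \<Longrightarrow>
    CC p q' \<phi> \<psi> d ! t = x (\<psi> + int d + int (t - (p * n - d)))"
  by (simp add: CC_def nth_append)

lemma x_cong': "(a - b) mod int n = 0 \<Longrightarrow> x a = x b"
  by (rule x_cong) (simp add: mod_eq_dvd_iff dvd_eq_mod_eq_0)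

lemma deg:
  assumes "\<phi> mod int n = \<psi> mod int n" "\<phi>' mod int n = \<psi>' mod int n"
  shows "Req (\<phi>, \<psi>) (\<phi>', \<psi>')"
proof -
  define k where "k = nat ((\<phi>' - \<phi>) mod int n)"
  have kk: "int k = (\<phi>' - \<phi>) mod int n" using n_pos by (simp add: k_def)
  have "Req (\<phi>, \<phi>) (\<phi> + int k, \<phi> + int k)" by (rule Req_diag_chain) simp
  moreover have "(\<phi> + int k) mod int n = \<phi>' mod int n"
    by (simp add: kk mod_add_right_eq)
  ultimately have "Req (\<phi>, \<phi>) (\<phi>', \<phi>')" using Req_cong by (metis fst_conv snd_conv)
  then show ?thesis using Req_cong assms by (metis fst_conv snd_conv)
qed


lemma x_eqI: "a = b + int n * k \<Longrightarrow> x a = x b"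
  using x_add_mult by simp

lemma mod_eq_obtain: "a mod int n = b mod int n \<Longrightarrow> \<exists>k. a = b + int n * k"
proof -
  assume "a mod int n = b mod int n"
  then have "int n dvd a - b" by (simp add: mod_eq_dvd_iff)
  then obtain k where "a - b = int n * k" by (auto simp: dvd_def)
  then show ?thesis by (intro exI[of _ k]) simp
qed

lemma CC_rot_nth: "rotate s (CC p q' \<phi> \<psi> d) ! t = CC p q' \<phi> \<psi> d ! ((t + s) mod ((p * n - d) + (q' * n - d)))"
  if "t < (p * n - d) + (q' * n - d)"
  using that by (simp add: nth_rotate CC_len add.commute)

lemma aligned:
  fixes p q' :: nat and \<phi> \<psi> \<phi>' \<psi>' :: int and d s :: nat
  assumes q1: "q' \<ge> 1" and p3: "p \<ge> 3" and dn: "d < n"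
    and A1: "A \<phi> \<psi> d" and A2: "A \<phi>' \<psi>' d"
    and sP: "s + n \<le> p * n - d"
    and rot: "rotate s (CC p q' \<phi> \<psi> d) = CC p q' \<phi>' \<psi>' d"
  shows "Req (\<phi>, \<psi>) (\<phi>', \<psi>')"
proof -
  define P where "P = p * n - d"
  define Q where "Q = q' * n - d"
  have n1: "n \<ge> 1" using n_pos by linarith
  have pn: "3 * n \<le> p * n" using p3 by (rule mult_le_mono1)
  have qn: "1 * n \<le> q' * n" using q1 by (rule mult_le_mono1)
  then have qn: "n \<le> q' * n" by simp
  have Pg: "P \<ge> 2 * n + 1" using pn dn n1 unfolding P_def by linarith
  have Qg: "Q \<ge> 1" using qn dn unfolding Q_def by linarith
  have sP': "s + n \<le> P" using sP by (simp add: P_def)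
  have "d \<le> p * n" using pn dn by linarith
  then have Pi: "int P = int p * int n - int d" by (simp add: P_def of_nat_diff)
  have "d \<le> q' * n" using qn dn by linarith
  then have Qi: "int Q = int q' * int n - int d" by (simp add: Q_def of_nat_diff)
  have xP: "x (a + int P) = x (a - int d)" for a
    by (rule x_eqI[where k = "int p"]) (simp add: Pi algebra_simps)
  have xQ: "x (a + int Q) = x (a - int d)" for a
    by (rule x_eqI[where k = "int q'"]) (simp add: Qi algebra_simps)
  have c1: "CC p q' \<phi> \<psi> d ! t = x (\<phi> + int t)" if "t < P" for t
    using that CC_nth1 P_def by simp
  have c2: "CC p q' \<phi> \<psi> d ! (P + t) = x (\<psi> + int d + int t)" if "t < Q" for t
    using that CC_nth2[of p d "P + t"] P_def Q_def by simp
  have c1': "CC p q' \<phi>' \<psi>' d ! t = x (\<phi>' + int t)" if "t < P" for t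
    using that CC_nth1 P_def by simp
  have c2': "CC p q' \<phi>' \<psi>' d ! (P + t) = x (\<psi>' + int d + int t)" if "t < Q" for t
    using that CC_nth2[of p d "P + t"] P_def Q_def by simp
  have rn: "CC p q' \<phi>' \<psi>' d ! t = CC p q' \<phi> \<psi> d ! ((t + s) mod (P + Q))" if "t < P + Q" for t
    using that CC_rot_nth[of t p d q' s \<phi> \<psi>] rot P_def Q_def by simp
  have ph: "(\<phi> + int s) mod int n = \<phi>' mod int n"
  proof (rule prim_seg)
    fix u assume u: "u < n"
    then have "u + s < P" "u < P + Q" "u < P" using sP' by linarith+
    then have "CC p q' \<phi>' \<psi>' d ! u = x (\<phi> + int (u + s))"
      using rn[of u] c1[of "u + s"] by simp
    moreover have "CC p q' \<phi>' \<psi>' d ! u = x (\<phi>' + int u)" using c1' \<open>u < P\<close> by simp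
    ultimately show "x (\<phi> + int s + int u) = x (\<phi>' + int u)" by (simp add: algebra_simps)
  qed
  then obtain k where k: "\<phi>' = \<phi> + int s + int n * k" using mod_eq_obtain by metis
  have x\<phi>': "x (\<phi>' + a) = x (\<phi> + int s + a)" for a
    by (rule x_eqI[where k = k]) (simp add: k algebra_simps)
  show ?thesis
  proof (cases "s = 0")
    case True
    then have ceq: "CC p q' \<phi>' \<psi>' d = CC p q' \<phi> \<psi> d" using rot by simp
    then have s2: "seg (\<psi> + int d) Q = seg (\<psi>' + int d) Q"
      by (simp add: CC_def P_def Q_def)
    have "seg \<psi> d = seg \<psi>' d"
    proof -
      have "\<phi>' - int d = (\<phi> - int d) + int n * k" using True k by simp
      then have "seg (\<phi> - int d) d = seg (\<phi>' - int d) d" using seg_add_n by metis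
      then show ?thesis using A1 A2 by (simp add: A_iff)
    qed
    then have "seg \<psi> (d + Q) = seg \<psi>' (d + Q)" using s2 by (simp add: seg_append)
    moreover have "d + Q \<ge> n" using qn dn unfolding Q_def by linarith
    ultimately have "\<psi> mod int n = \<psi>' mod int n" by (rule prim_seg2)
    moreover have "\<phi> mod int n = \<phi>' mod int n" using k True by simp
    ultimately show ?thesis using Req_cong[of "(\<phi>, \<psi>)" "(\<phi>, \<psi>)" "(\<phi>', \<psi>')" "(\<phi>, \<psi>)"] by simp
  next
    case False
    have i1: "P - s < P" "P - s < P + Q" "P - s + s = P" using False sP' Qg by linarith+
    have e1: "x (\<psi> + int d) = x (\<phi> - int d)"
    proof -
      have "CC p q' \<phi>' \<psi>' d ! (P - s) = CC p q' \<phi> \<psi> d ! (P + 0)"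
        using rn[of "P - s"] i1 Qg by simp
      also have "\<dots> = x (\<psi> + int d)" using c2[of 0] Qg by simp
      finally have "CC p q' \<phi>' \<psi>' d ! (P - s) = x (\<psi> + int d)" .
      then have "x (\<psi> + int d) = x (\<phi>' + int (P - s))" using c1'[of "P - s"] i1 by simp
      also have "\<dots> = x (\<phi> + int P)" using x\<phi>'[of "int (P - s)"] i1 by (simp add: of_nat_diff)
      also have "\<dots> = x (\<phi> - int d)" by (rule xP)
      finally show ?thesis .
    qed
    have d0: "d = 0"
    proof (rule ccontr)
      assume "d \<noteq> 0"
      have "\<forall>t<d. x (\<psi> + int t) = bar (x (\<phi> - 1 - int t))" using A1 by (simp add: A_def)
      then have "x (\<psi> + int (d - 1)) = bar (x (\<phi> - 1 - int (d - 1)))" using \<open>d \<noteq> 0\<close> by (auto dest: spec[of _ "d - 1"])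
      then have "x (\<psi> + int d - 1) = bar (x (\<phi> - int d))" using \<open>d \<noteq> 0\<close> by (simp add: of_nat_diff algebra_simps)
      then have "x (\<psi> + int d - 1 + 1) = bar (x (\<psi> + int d - 1))" using e1 by (simp add: bar_eq_iff)
      then show False using cyc2 by blast
    qed
    have xP0: "x (a + int P) = x a" for a using xP[of a] d0 by simp
    have xQ0: "x (a + int Q) = x a" for a using xQ[of a] d0 by simp
    have Qn: "Q \<ge> n" using qn d0 by (simp add: Q_def)
    show ?thesis
    proof (cases "s \<le> Q")
      case True
      have eq: "x (\<phi> + int u) = x (\<psi> + int u)" if "u < s" for u
      proof -
        have j: "P - s + u < P + Q" "(P - s + u + s) = P + u" "P + u < P + Q" "u < Q" "P - s + u < P"
          using that True sP' by linarith+
        have "CC p q' \<phi>' \<psi>' d ! (P - s + u) = CC p q' \<phi> \<psi> d ! (P + u)"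
          using rn[of "P - s + u"] j by simp
        also have "\<dots> = x (\<psi> + int u)" using c2[of u] j d0 by simp
        finally have "x (\<psi> + int u) = x (\<phi>' + int (P - s + u))" using c1'[of "P - s + u"] j by simp
        also have "\<dots> = x (\<phi> + int u + int P)"
          using x\<phi>'[of "int (P - s + u)"] j by (simp add: of_nat_diff algebra_simps)
        also have "\<dots> = x (\<phi> + int u)" by (rule xP0)
        finally show ?thesis by simp
      qed
      have r1: "Req (\<phi>, \<psi>) (\<phi> + int s, \<psi> + int s)" using eq by (rule Req_diag_chain)
      have "(\<psi> + int s) mod int n = \<psi>' mod int n"
      proof (rule prim_seg)
        fix u assume u: "u < n"
        then have uQ: "u < Q" "P + u < P + Q" using Qn by linarith+
        have "x (\<psi>' + int u) = CC p q' \<phi>' \<psi>' d ! (P + u)" using c2'[of u] uQ d0 by simp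
        also have "\<dots> = CC p q' \<phi> \<psi> d ! ((P + u + s) mod (P + Q))" using rn[of "P + u"] uQ by simp
        also have "\<dots> = x (\<psi> + int s + int u)"
        proof (cases "u + s < Q")
          case True
          then have "(P + u + s) mod (P + Q) = P + (u + s)" by simp
          then show ?thesis using c2[of "u + s"] True d0 by (simp add: algebra_simps)
        next
          case False
          have j: "P + u + s - (P + Q) < P + Q" "u + s - Q < s" "P + u + s - (P + Q) = u + s - Q"
            "P + Q \<le> P + u + s"
            using False u Qn \<open>s \<le> Q\<close> Qg by linarith+
          then have "(P + u + s) mod (P + Q) = u + s - Q"
            by (metis le_mod_geq mod_less)
          moreover have "u + s - Q < P" using j sP' by linarith
          ultimately have "CC p q' \<phi> \<psi> d ! ((P + u + s) mod (P + Q)) = x (\<psi> + int (u + s - Q))"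
            using c1[of "u + s - Q"] eq[of "u + s - Q"] j by simp
          also have "\<dots> = x (\<psi> + int s + int u - int Q)"
            using False by (simp add: of_nat_diff algebra_simps)
          also have "\<dots> = x (\<psi> + int s + int u)" using xQ0[of "\<psi> + int s + int u - int Q"] by simp
          finally show ?thesis .
        qed
        finally show "x (\<psi> + int s + int u) = x (\<psi>' + int u)" by simp
      qed
      then show ?thesis using ph r1 Req_cong[of "(\<phi>, \<psi>)" "(\<phi>, \<psi>)" "(\<phi> + int s, \<psi> + int s)" "(\<phi>', \<psi>')"] by simp
    next
      case False
      have "\<phi> mod int n = \<psi> mod int n"
      proof (rule prim_seg)
        fix u assume u: "u < n"
        have j: "P - s + u < P + Q" "(P - s + u + s) = P + u" "P + u < P + Q" "u < Q" "P - s + u < P"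
          using u False sP' Qn by linarith+
        have "CC p q' \<phi>' \<psi>' d ! (P - s + u) = CC p q' \<phi> \<psi> d ! (P + u)"
          using rn[of "P - s + u"] j by simp
        also have "\<dots> = x (\<psi> + int u)" using c2[of u] j d0 by simp
        finally have "x (\<psi> + int u) = x (\<phi>' + int (P - s + u))" using c1'[of "P - s + u"] j by simp
        also have "\<dots> = x (\<phi> + int u + int P)"
          using x\<phi>'[of "int (P - s + u)"] j by (simp add: of_nat_diff algebra_simps)
        also have "\<dots> = x (\<phi> + int u)" by (rule xP0)
        finally show "x (\<phi> + int u) = x (\<psi> + int u)" by simp
      qed
      then obtain k2 where k2: "\<psi> = \<phi> + int n * k2" using mod_eq_obtain by metis
      have call: "CC p q' \<phi> \<psi> d ! t = x (\<phi> + int t)" if "t < P + Q" for t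
      proof (cases "t < P")
        case True then show ?thesis using c1 by simp
      next
        case False
        then have "t = P + (t - P)" "t - P < Q" using that by linarith+
        then have "CC p q' \<phi> \<psi> d ! t = x (\<psi> + int (t - P))" using c2[of "t - P"] d0 by simp
        also have "\<dots> = x (\<phi> + int (t - P) + int P)"
          by (subst xP0) (rule x_eqI[where k = k2], simp add: k2 algebra_simps)
        also have "\<dots> = x (\<phi> + int t)" using False by (simp add: of_nat_diff)
        finally show ?thesis .
      qed
      have "\<phi>' mod int n = \<psi>' mod int n"
      proof (rule prim_seg)
        fix u assume u: "u < n"
        then have uQ: "u < Q" "P + u < P + Q" using Qn by linarith+
        have "x (\<psi>' + int u) = CC p q' \<phi>' \<psi>' d ! (P + u)" using c2'[of u] uQ d0 by simp
        also have "\<dots> = CC p q' \<phi> \<psi> d ! ((P + u + s) mod (P + Q))" using rn[of "P + u"] uQ by simp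
        also have "\<dots> = x (\<phi> + int ((P + u + s) mod (P + Q)))"
          using call[of "(P + u + s) mod (P + Q)"] Qg by simp
        also have "\<dots> = x (\<phi>' + int u)"
        proof -
          obtain m where m: "P + u + s = (P + u + s) mod (P + Q) + (P + Q) * m"
            by (metis mod_div_mult_eq add.commute mult.commute)
          have "int ((P + u + s) mod (P + Q)) = int P + int u + int s - (int P + int Q) * int m"
            using arg_cong[OF m, of int] by simp
          moreover have "int P = int n * int p" "int Q = int n * int q'" using Pi Qi d0 by simp_all
          ultimately show ?thesis
            by (intro x_eqI[where k = "int p - k - (int p + int q') * int m"]) (simp add: k algebra_simps)
        qed
        finally show "x (\<phi>' + int u) = x (\<psi>' + int u)" by simp
      qed
      then show ?thesis using deg \<open>\<phi> mod int n = \<psi> mod int n\<close> by simp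
    qed
  qed
qed

lemma nonaligned:
  fixes p q' :: nat and \<phi> \<psi> \<phi>' \<psi>' :: int and d r :: nat
  assumes q1: "q' \<ge> 1" and p3: "p \<ge> 3" and pq: "q' < p" and dn: "d < n"
    and A1: "A \<phi> \<psi> d"
    and r1: "p * n - d < r + n" and r2: "r < (q' * n - d) + n"
    and rot: "rotate r (CC p q' \<phi> \<psi> d) = CC p q' \<phi>' \<psi>' d"
  shows "\<phi> mod int n = \<psi> mod int n \<and> d = 0"
proof -
  define P where "P = p * n - d"
  define Q where "Q = q' * n - d"
  have n1: "n \<ge> 1" using n_pos by linarith
  have pn: "3 * n \<le> p * n" using p3 by (rule mult_le_mono1)
  have qn: "1 * n \<le> q' * n" using q1 by (rule mult_le_mono1)
  then have qn: "n \<le> q' * n" by simp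
  have pqn: "(q' + 1) * n \<le> p * n" using pq by (intro mult_le_mono1) simp
  have Pg: "P \<ge> 2 * n + 1" using pn dn n1 unfolding P_def by linarith
  have Qg: "Q \<ge> 1" using qn dn unfolding Q_def by linarith
  have pqn': "q' * n + n \<le> p * n" using pqn by (simp add: algebra_simps)
  have PQ: "P \<ge> Q + n" using pqn' dn qn unfolding P_def Q_def by linarith
  have "d \<le> p * n" using pn dn by linarith
  then have Pi: "int P = int p * int n - int d" by (simp add: P_def of_nat_diff)
  have "d \<le> q' * n" using qn dn by linarith
  then have Qi: "int Q = int q' * int n - int d" by (simp add: Q_def of_nat_diff)
  have xP: "x (a + int P) = x (a - int d)" for a
    by (rule x_eqI[where k = "int p"]) (simp add: Pi algebra_simps)
  have xQ: "x (a + int Q) = x (a - int d)" for a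
    by (rule x_eqI[where k = "int q'"]) (simp add: Qi algebra_simps)
  have c1: "CC p q' \<phi> \<psi> d ! t = x (\<phi> + int t)" if "t < P" for t
    using that CC_nth1 P_def by simp
  have c2: "CC p q' \<phi> \<psi> d ! (P + t) = x (\<psi> + int d + int t)" if "t < Q" for t
    using that CC_nth2[of p d "P + t"] P_def Q_def by simp
  have c1': "CC p q' \<phi>' \<psi>' d ! t = x (\<phi>' + int t)" if "t < P" for t
    using that CC_nth1 P_def by simp
  have rn: "CC p q' \<phi>' \<psi>' d ! t = CC p q' \<phi> \<psi> d ! ((t + r) mod (P + Q))" if "t < P + Q" for t
    using that CC_rot_nth[of t p d q' r \<phi> \<psi>] rot P_def Q_def by simp
  have rP: "r < P" "Q < r" using r1 r2 PQ unfolding P_def Q_def by linarith+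
  define a where "a = P - r"
  define b where "b = r - Q"
  have ab: "a \<ge> 1" "b \<ge> 1" "a < n" "b < n" "a + r = P" "r = Q + b"
    using rP r1 r2 unfolding a_def b_def P_def Q_def by linarith+
  have p1: "p = q' + 1"
  proof (rule ccontr)
    assume "p \<noteq> q' + 1"
    then have "(q' + 2) * n \<le> p * n" using pq by (intro mult_le_mono1) simp
    then have "q' * n + 2 * n \<le> p * n" by (simp add: algebra_simps)
    then show False using r1 r2 dn qn by linarith
  qed
  have Qn: "Q \<ge> n"
  proof -
    have "2 \<le> q'" using p1 p3 by simp
    then have "2 * n \<le> q' * n" by (rule mult_le_mono1)
    then show ?thesis using dn unfolding Q_def by linarith
  qed
  have abn: "a + b = n" "a + Q + b = P"
  proof -
    have "p * n = q' * n + n" using p1 by simp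
    then show "a + b = n" "a + Q + b = P" using ab dn qn unfolding P_def Q_def by linarith+
  qed
  have mid: "x (\<phi>' + int a + int u) = x (\<psi> + int d + int u)" if "u < Q" for u
  proof -
    have j: "a + u < P + Q" "(a + u + r) mod (P + Q) = P + u" "a + u < P"
      using that ab abn by simp_all
    have "x (\<phi>' + int a + int u) = CC p q' \<phi>' \<psi>' d ! (a + u)" using c1'[of "a + u"] j by (simp add: algebra_simps)
    also have "\<dots> = CC p q' \<phi> \<psi> d ! (P + u)" using rn[of "a + u"] j by simp
    also have "\<dots> = x (\<psi> + int d + int u)" using c2 that by simp
    finally show ?thesis .
  qed
  have "(\<phi>' + int a) mod int n = (\<psi> + int d) mod int n"
    by (rule prim_seg) (use mid Qn in simp)
  then obtain k where k: "\<phi>' + int a = \<psi> + int d + int n * k" using mod_eq_obtain by metis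
  have tail: "x (\<psi> + int d - 1) = x (\<phi> - int d - 1)"
  proof -
    have j: "a - 1 < P + Q" "(a - 1 + r) mod (P + Q) = P - 1" "a - 1 < P" "P - 1 < P"
      using ab abn Qg by simp_all
    have "x (\<phi>' + int (a - 1)) = CC p q' \<phi>' \<psi>' d ! (a - 1)" using c1'[of "a - 1"] j by simp
    also have "\<dots> = CC p q' \<phi> \<psi> d ! (P - 1)" using rn[of "a - 1"] j by simp
    also have "\<dots> = x (\<phi> + int (P - 1))" using c1 j by simp
    also have "\<dots> = x (\<phi> - 1 + int P)" using Pg by (simp add: of_nat_diff algebra_simps)
    also have "\<dots> = x (\<phi> - int d - 1)" using xP[of "\<phi> - 1"] by (simp add: algebra_simps)
    finally have "x (\<phi>' + int (a - 1)) = x (\<phi> - int d - 1)" .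
    moreover have "x (\<phi>' + int (a - 1)) = x (\<psi> + int d - 1)"
      by (rule x_eqI[where k = k]) (use ab k in \<open>simp add: of_nat_diff algebra_simps\<close>)
    ultimately show ?thesis by simp
  qed
  have d0: "d = 0"
  proof (rule ccontr)
    assume "d \<noteq> 0"
    have "\<forall>t<d. x (\<psi> + int t) = bar (x (\<phi> - 1 - int t))" using A1 by (simp add: A_def)
    then have "x (\<psi> + int (d - 1)) = bar (x (\<phi> - 1 - int (d - 1)))" using \<open>d \<noteq> 0\<close> by (auto dest: spec[of _ "d - 1"])
    then have "x (\<psi> + int d - 1) = bar (x (\<phi> - int d))" using \<open>d \<noteq> 0\<close> by (simp add: of_nat_diff algebra_simps)
    then have "x (\<phi> - int d - 1) = bar (x (\<phi> - int d - 1 + 1))" using tail by simp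
    then show False using cyc1 by blast
  qed
  have xP0: "x (e + int P) = x e" for e using xP[of e] d0 by simp
  have xQ0: "x (e + int Q) = x e" for e using xQ[of e] d0 by simp
  have tlx: "x (\<phi> - int a + int v) = x (\<psi> - int a + int v)" if "v < a" for v
  proof -
    have j: "v < P + Q" "(v + r) mod (P + Q) = v + r" "v + r < P" "v < P" using that ab abn by simp_all
    have "x (\<phi>' + int v) = CC p q' \<phi>' \<psi>' d ! v" using c1' j by simp
    also have "\<dots> = x (\<phi> + int (v + r))" using rn[of v] j c1[of "v + r"] by simp
    also have "\<dots> = x (\<phi> - int a + int v + int P)"
    proof -
      have "int P = int a + int r" using ab(5) by (metis of_nat_add)
      then show ?thesis by (simp add: algebra_simps)
    qed
    also have "\<dots> = x (\<phi> - int a + int v)" by (rule xP0)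
    finally have "x (\<phi>' + int v) = x (\<phi> - int a + int v)" .
    moreover have "x (\<phi>' + int v) = x (\<psi> - int a + int v)"
      by (rule x_eqI[where k = k]) (use k d0 in \<open>simp add: algebra_simps\<close>)
    ultimately show ?thesis by simp
  qed
  have hdx: "x (\<phi> + int v) = x (\<psi> + int v)" if "v < b" for v
  proof -
    have j0: "a + Q + v + r = (P + Q) + v" "v < P + Q" using that ab abn by linarith+
    have jm: "(a + Q + v + r) mod (P + Q) = v" unfolding j0(1) using j0(2) by simp
    have j: "a + Q + v < P + Q" "a + Q + v < P" "v < P"
      using that ab abn j0 by linarith+
    have "x (\<phi>' + int (a + Q + v)) = CC p q' \<phi>' \<psi>' d ! (a + Q + v)" using c1' j by simp
    also have "\<dots> = x (\<phi> + int v)" using rn[of "a + Q + v"] j jm c1[of v] by simp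
    finally have "x (\<phi>' + int (a + Q + v)) = x (\<phi> + int v)" .
    moreover have "x (\<phi>' + int (a + Q + v)) = x (\<psi> + int v + int Q)"
      by (rule x_eqI[where k = k]) (use k d0 in \<open>simp add: algebra_simps\<close>)
    ultimately show ?thesis using xQ0 by simp
  qed
  have "(\<phi> - int a) mod int n = (\<psi> - int a) mod int n"
  proof (rule prim_seg)
    fix u assume u: "u < n"
    show "x (\<phi> - int a + int u) = x (\<psi> - int a + int u)"
    proof (cases "u < a")
      case True then show ?thesis using tlx by blast
    next
      case False
      then have "u - a < b" using u abn by linarith
      then have h: "x (\<phi> + int (u - a)) = x (\<psi> + int (u - a))" using hdx by blast
      have e: "int (u - a) = int u - int a" using False by (simp add: of_nat_diff)
      have "\<phi> - int a + int u = \<phi> + int (u - a)" "\<psi> - int a + int u = \<psi> + int (u - a)"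
        unfolding e by simp_all
      then show ?thesis using h by metis
    qed
  qed
  then obtain K where "\<phi> - int a = \<psi> - int a + int n * K" using mod_eq_obtain by metis
  then have "\<phi> = \<psi> + int n * K" by simp
  then have "\<phi> mod int n = \<psi> mod int n" by simp
  then show ?thesis using d0 by simp
qed

lemma core:
  fixes p q' :: nat and \<phi> \<psi> \<phi>' \<psi>' :: int and d r :: nat
  assumes q1: "q' \<ge> 1" and p3: "p \<ge> 3" and pq: "q' < p" and dn: "d < n"
    and A1: "A \<phi> \<psi> d" and A2: "A \<phi>' \<psi>' d"
    and rot: "rotate r (CC p q' \<phi> \<psi> d) = CC p q' \<phi>' \<psi>' d"
  shows "Req (\<phi>, \<psi>) (\<phi>', \<psi>')"
proof -
  define P where "P = p * n - d"
  define Q where "Q = q' * n - d"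
  define N where "N = P + Q"
  define c where "c = CC p q' \<phi> \<psi> d"
  define cc where "cc = CC p q' \<phi>' \<psi>' d"
  have n1: "n \<ge> 1" using n_pos by linarith
  have qn: "1 * n \<le> q' * n" using q1 by (rule mult_le_mono1)
  then have qn: "n \<le> q' * n" by simp
  have Qg: "Q \<ge> 1" using qn dn unfolding Q_def by linarith
  have lc: "length c = N" by (simp add: c_def N_def P_def Q_def CC_len)
  have Npos: "N > 0" using Qg by (simp add: N_def)
  define rr where "rr = r mod N"
  have rrN: "rr < N" using Npos by (simp add: rr_def)
  have rotc: "rotate rr c = cc" using rot lc by (simp add: c_def cc_def rr_def rotate_conv_mod[of r])
  have bk: "rotate (N - rr) cc = c"
  proof -
    have e: "N - rr + rr = N" using rrN by simp
    have "rotate (N - rr) cc = rotate N c" unfolding rotc[symmetric] rotate_rotate e ..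
    also have "\<dots> = c" using lc by (simp add: rotate_conv_mod[of N])
    finally show ?thesis .
  qed
  show ?thesis
  proof (cases "rr + n \<le> P")
    case True
    then show ?thesis using aligned[OF q1 p3 dn A1 A2, of rr] rotc by (simp add: P_def c_def cc_def)
  next
    case c1: False
    show ?thesis
    proof (cases "N - rr + n \<le> P")
      case True
      then have "Req (\<phi>', \<psi>') (\<phi>, \<psi>)"
        using aligned[OF q1 p3 dn A2 A1, of "N - rr"] bk by (simp add: P_def c_def cc_def)
      then show ?thesis by (rule Req_sym)
    next
      case c2: False
      have h1: "\<phi> mod int n = \<psi> mod int n \<and> d = 0"
        using nonaligned[OF q1 p3 pq dn A1, of rr \<phi>' \<psi>'] c1 c2 rotc rrN
        by (simp add: P_def Q_def N_def c_def cc_def)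
      have i1: "p * n - d < N - rr + n" "N - rr < (q' * n - d) + n"
        using c1 c2 rrN unfolding N_def P_def Q_def by linarith+
      have h2: "\<phi>' mod int n = \<psi>' mod int n \<and> d = 0"
        using nonaligned[OF q1 p3 pq dn A2 i1] bk
        by (simp add: c_def cc_def)
      show ?thesis using h1 h2 deg by blast
    qed
  qed
qed

end



lemma word_bar_word_bar[simp]: "word_bar (word_bar T) = T"
  by (simp add: word_bar_def rev_map[symmetric] comp_def)

lemma reduced_iff: "reduced l \<longleftrightarrow> (\<forall>t. Suc t < length l \<longrightarrow> l ! Suc t \<noteq> bar (l ! t))"
proof (induction l rule: reduced.induct)
  case (1 a b l)
  show ?case
  proof
    assume "reduced (a # b # l)"
    then have "b \<noteq> bar a" "\<forall>t. Suc t < length (b # l) \<longrightarrow> (b # l) ! Suc t \<noteq> bar ((b # l) ! t)" using 1 by auto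
    then show "\<forall>t. Suc t < length (a # b # l) \<longrightarrow> (a # b # l) ! Suc t \<noteq> bar ((a # b # l) ! t)"
      by (auto simp: nth_Cons split: nat.splits)
  next
    assume h: "\<forall>t. Suc t < length (a # b # l) \<longrightarrow> (a # b # l) ! Suc t \<noteq> bar ((a # b # l) ! t)"
    then have "b \<noteq> bar a" by (metis length_Cons nth_Cons_0 nth_Cons_Suc zero_less_Suc Suc_less_eq)
    moreover have "\<forall>t. Suc t < length (b # l) \<longrightarrow> (b # l) ! Suc t \<noteq> bar ((b # l) ! t)"
    proof (intro allI impI)
      fix t assume "Suc t < length (b # l)"
      then show "(b # l) ! Suc t \<noteq> bar ((b # l) ! t)" using h[rule_format, of "Suc t"] by simp
    qed
    ultimately show "reduced (a # b # l)" using 1 by simp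
  qed
qed auto

context pw begin

lemma A_least:
  assumes "\<not> A i j N"
  defines "m \<equiv> LEAST m. \<not> A i j (m + 1)"
  shows "A i j m" "\<not> A i j (m + 1)"
proof -
  have ex: "\<not> A i j ((N - 1) + 1) \<or> N = 0" using assms(1) by (cases N) auto
  have "N \<noteq> 0" using assms(1) by (auto simp: A_def)
  then have ex: "\<not> A i j ((N - 1) + 1)" using ex by simp
  show "\<not> A i j (m + 1)" unfolding m_def by (rule LeastI[of "\<lambda>m. \<not> A i j (m + 1)", OF ex])
  have "A i j (t + 1)" if "t < m" for t using not_less_Least[OF that[unfolded m_def]] by simp
  then show "A i j m" by (auto simp: A_def)
qed

lemma A_not_n: "\<not> A i j n" using noinv by blast

lemma A_lt_n: "A i j m \<Longrightarrow> m < n"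
  using noinv[of i j m] not_le by blast

lemma A_fail: "A i j m \<Longrightarrow> \<not> A i j (m + 1) \<Longrightarrow> x (j + int m) \<noteq> bar (x (i - 1 - int m))"
  by (auto simp: A_def less_Suc_eq)

lemma canon:
  fixes p q' :: nat and i j :: int
  assumes p1: "p \<ge> 1" and q1: "q' \<ge> 1"
  shows "\<exists>i0 j0 d. Req (i, j) (i0, j0) \<and> A i0 j0 d \<and> d < n \<and>
     rel (FI (seg i (p * n) @ seg j (q' * n))) (CC p q' i0 j0 d)"
proof -
  have n1: "n \<ge> 1" using n_pos by linarith
  have pn: "1 * n \<le> p * n" using p1 by (rule mult_le_mono1)
  then have pn: "n \<le> p * n" by simp
  have qn: "1 * n \<le> q' * n" using q1 by (rule mult_le_mono1)
  then have qn: "n \<le> q' * n" by simp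
  define b where "b = (LEAST m. \<not> A j i (m + 1))"
  have Ab: "A j i b" "\<not> A j i (b + 1)" using A_least[OF A_not_n] b_def by auto
  have bn: "b < n" using A_lt_n[OF Ab(1)] .
  define i0 where "i0 = i + int b"
  define j0 where "j0 = j - int b"
  define d where "d = (LEAST m. \<not> A i0 j0 (m + 1))"
  have Ad: "A i0 j0 d" "\<not> A i0 j0 (d + 1)" using A_least[OF A_not_n] d_def by auto
  have dn: "d < n" using A_lt_n[OF Ad(1)] .
  have bp: "b \<le> p * n" and bq: "b \<le> q' * n" and dp: "d \<le> p * n" and dq: "d \<le> q' * n"
    using bn dn pn qn by linarith+
  have R1: "Req (i, j) (i0, j0)" unfolding i0_def j0_def
    by (rule Req_anti_chain) (use Ab(1) in \<open>simp add: A_def\<close>)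
  define T where "T = seg (j - int b) b"
  have sib: "seg i b = word_bar T" using Ab(1) by (simp add: A_iff T_def)
  have wT: "word_bar (seg i b) = T" using sib by simp
  define R where "R = seg i0 (p * n - b) @ seg j (q' * n - b)"
  have step1: "rel (FI (seg i (p * n) @ seg j (q' * n))) (FI R)"
  proof -
    have e: "b + (p * n - b) = p * n" using bn pn by linarith
    have "seg i (p * n) = seg i b @ seg i0 (p * n - b)"
      using seg_append[of i b "p * n - b"] unfolding e i0_def .
    moreover have "seg j (q' * n) = seg j (q' * n - b) @ T"
    proof -
      have e: "q' * n - b + b = q' * n" using bn qn by linarith
      have "seg j (q' * n) = seg j (q' * n - b) @ seg (j + int (q' * n - b)) b"
        using seg_append[of j "q' * n - b" b] unfolding e .
      moreover have "j + int (q' * n - b) = (j - int b) + int n * int q'"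
        using bq by (simp add: of_nat_diff algebra_simps)
      ultimately show ?thesis using seg_add_n by (simp add: T_def)
    qed
    ultimately have "seg i (p * n) @ seg j (q' * n) = seg i b @ (seg i0 (p * n - b) @ seg j (q' * n - b) @ T)"
      by simp
    then have "rel (FI (seg i (p * n) @ seg j (q' * n))) (FI ((seg i0 (p * n - b) @ seg j (q' * n - b)) @ T @ word_bar T @ []))"
      using FI_swap[of "seg i b" "seg i0 (p * n - b) @ seg j (q' * n - b) @ T"] sib by simp
    then show ?thesis using FI_cancel_block[of "seg i0 (p * n - b) @ seg j (q' * n - b)" T "[]"]
      by (auto simp: R_def intro: rel_trans)
  qed
  have step2: "rel (FI (seg i0 (p * n) @ seg j0 (q' * n))) (FI R)"
  proof -
    have e: "p * n - b + b = p * n" using bn pn by linarith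
    have "seg i0 (p * n) = seg i0 (p * n - b) @ seg (i0 + int (p * n - b)) b"
      using seg_append[of i0 "p * n - b" b] unfolding e .
    moreover have "i0 + int (p * n - b) = i + int n * int p"
      using bp by (simp add: i0_def of_nat_diff algebra_simps)
    ultimately have e1: "seg i0 (p * n) = seg i0 (p * n - b) @ seg i b" using seg_add_n by simp
    have e: "b + (q' * n - b) = q' * n" using bn qn by linarith
    have e2: "seg j0 (q' * n) = T @ seg j (q' * n - b)"
      using seg_append[of j0 b "q' * n - b"] unfolding e by (simp add: T_def j0_def)
    have "seg i0 (p * n) @ seg j0 (q' * n) = seg i0 (p * n - b) @ seg i b @ word_bar (seg i b) @ seg j (q' * n - b)"
      using e1 e2 wT by simp
    then show ?thesis using FI_cancel_block[of "seg i0 (p * n - b)" "seg i b" "seg j (q' * n - b)"]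
      by (simp add: R_def)
  qed
  have step3: "rel (FI (seg i0 (p * n) @ seg j0 (q' * n))) (FI (CC p q' i0 j0 d))"
  proof -
    have e: "p * n - d + d = p * n" using dn pn by linarith
    have "seg i0 (p * n) = seg i0 (p * n - d) @ seg (i0 + int (p * n - d)) d"
      using seg_append[of i0 "p * n - d" d] unfolding e .
    moreover have "i0 + int (p * n - d) = (i0 - int d) + int n * int p"
      using dp by (simp add: of_nat_diff algebra_simps)
    ultimately have e1: "seg i0 (p * n) = seg i0 (p * n - d) @ seg (i0 - int d) d" using seg_add_n by simp
    have e: "d + (q' * n - d) = q' * n" using dn qn by linarith
    have e2: "seg j0 (q' * n) = seg j0 d @ seg (j0 + int d) (q' * n - d)"
      using seg_append[of j0 d "q' * n - d"] unfolding e .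
    have e3: "seg j0 d = word_bar (seg (i0 - int d) d)" using Ad(1) by (simp add: A_iff)
    have "seg i0 (p * n) @ seg j0 (q' * n) = seg i0 (p * n - d) @ seg (i0 - int d) d @ word_bar (seg (i0 - int d) d) @ seg (j0 + int d) (q' * n - d)"
      using e1 e2 e3 by simp
    then show ?thesis using FI_cancel_block[of "seg i0 (p * n - d)" "seg (i0 - int d) d" "seg (j0 + int d) (q' * n - d)"]
      by (simp add: CC_def)
  qed
  have fixc: "FI (CC p q' i0 j0 d) = CC p q' i0 j0 d"
  proof (rule FI_fix)
    define P where "P = p * n - d"
    define Q where "Q = q' * n - d"
    have Pg: "P \<ge> 1" "Q \<ge> 1" using pn qn dn unfolding P_def Q_def by linarith+
    have c1: "CC p q' i0 j0 d ! t = x (i0 + int t)" if "t < P" for t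
      using that CC_nth1 P_def by simp
    have c2: "CC p q' i0 j0 d ! (P + t) = x (j0 + int d + int t)" if "t < Q" for t
      using that CC_nth2[of p d "P + t"] P_def Q_def by simp
    have len: "length (CC p q' i0 j0 d) = P + Q" by (simp add: CC_len P_def Q_def)
    have "d \<le> p * n" using pn dn by linarith
    then have Pi: "int P = int p * int n - int d" by (simp add: P_def of_nat_diff)
    have "d \<le> q' * n" using qn dn by linarith
    then have Qi: "int Q = int q' * int n - int d" by (simp add: Q_def of_nat_diff)
    show "reduced (CC p q' i0 j0 d)" unfolding reduced_iff len
    proof (intro allI impI)
      fix t assume t: "Suc t < P + Q"
      consider "Suc t < P" | "Suc t = P" | "P < Suc t" by linarith
      then show "CC p q' i0 j0 d ! Suc t \<noteq> bar (CC p q' i0 j0 d ! t)"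
      proof cases
        case 1 then show ?thesis using c1[of t] c1[of "Suc t"] cyc2[of "i0 + int t"] by (simp add: algebra_simps)
      next
        case 2
        have "CC p q' i0 j0 d ! Suc t = x (j0 + int d)" using c2[of 0] Pg 2 by simp
        moreover have "CC p q' i0 j0 d ! t = x (i0 - 1 - int d)"
        proof -
          have "CC p q' i0 j0 d ! t = x (i0 + int t)" using c1 2 by simp
          also have "\<dots> = x (i0 - 1 - int d)"
            by (rule x_eqI[where k = "int p"]) (use 2 Pi in \<open>simp add: algebra_simps\<close>)
          finally show ?thesis .
        qed
        ultimately show ?thesis using A_fail[OF Ad] by simp
      next
        case 3
        then obtain u where u: "t = P + u" "Suc u < Q" using t by (metis add_Suc_right less_iff_Suc_add less_Suc_eq_le le_add_diff_inverse add_less_cancel_left)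
        show ?thesis using c2[of u] c2[of "Suc u"] u cyc2[of "j0 + int d + int u"] by (simp add: algebra_simps)
      qed
    qed
    show "CC p q' i0 j0 d = [] \<or> hd (CC p q' i0 j0 d) \<noteq> bar (last (CC p q' i0 j0 d))"
    proof -
      have "CC p q' i0 j0 d \<noteq> []" using len Pg by auto
      then have hd: "hd (CC p q' i0 j0 d) = x i0" using c1[of 0] Pg by (simp add: hd_conv_nth)
      have "last (CC p q' i0 j0 d) = CC p q' i0 j0 d ! (P + (Q - 1))"
        using \<open>CC p q' i0 j0 d \<noteq> []\<close> len Pg by (simp add: last_conv_nth)
      also have "\<dots> = x (j0 + int d + int (Q - 1))" using c2[of "Q - 1"] Pg by linarith
      also have "\<dots> = x (j - 1 - int b)"
        by (rule x_eqI[where k = "int q'"]) (use Pg Qi in \<open>simp add: j0_def of_nat_diff algebra_simps\<close>)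
      finally have "last (CC p q' i0 j0 d) = x (j - 1 - int b)" .
      moreover have "x (i + int b) \<noteq> bar (x (j - 1 - int b))" using A_fail[OF Ab] by simp
      ultimately show ?thesis using hd by (simp add: i0_def)
    qed
  qed
  have "rel (FI (seg i (p * n) @ seg j (q' * n))) (CC p q' i0 j0 d)"
    using rel_trans[OF step1 rel_trans[OF rel_sym[OF step2] step3]] fixc by simp
  then show ?thesis using R1 Ad dn by blast
qed

lemma main_pq:
  fixes p q' :: nat and i j k h :: int
  assumes q1: "q' \<ge> 1" and p3: "p \<ge> 3" and pq: "q' < p"
    and r: "rel (FI (seg i (p * n) @ seg j (q' * n))) (FI (seg k (p * n) @ seg h (q' * n)))"
  shows "Req (i, j) (k, h)"
proof -
  have p1: "p \<ge> 1" using p3 by simp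
  obtain i0 j0 d where a: "Req (i, j) (i0, j0)" "A i0 j0 d" "d < n"
      "rel (FI (seg i (p * n) @ seg j (q' * n))) (CC p q' i0 j0 d)"
    using canon[OF p1 q1, of i j] by blast
  obtain k0 h0 d' where b: "Req (k, h) (k0, h0)" "A k0 h0 d'" "d' < n"
      "rel (FI (seg k (p * n) @ seg h (q' * n))) (CC p q' k0 h0 d')"
    using canon[OF p1 q1, of k h] by blast
  have "rel (CC p q' i0 j0 d) (CC p q' k0 h0 d')"
    using rel_trans[OF rel_trans[OF rel_sym[OF a(4)] r] b(4)] .
  then obtain rr where rot: "CC p q' k0 h0 d' = rotate rr (CC p q' i0 j0 d)" unfolding rel_def by blast
  have pn: "1 * n \<le> p * n" using p1 by (rule mult_le_mono1)
  have qn: "1 * n \<le> q' * n" using q1 by (rule mult_le_mono1)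
  have "length (CC p q' k0 h0 d') = length (CC p q' i0 j0 d)" using rot by simp
  then have "(p * n - d') + (q' * n - d') = (p * n - d) + (q' * n - d)" by (simp add: CC_len)
  then have dd: "d' = d" using pn qn a(3) b(3) by linarith
  have "Req (i0, j0) (k0, h0)"
    using core[OF q1 p3 pq a(3) a(2), of k0 h0 rr] b(2) rot dd by simp
  then show ?thesis using a(1) b(1) by (blast intro: Req_trans Req_sym)
qed

end

theorem proposition2p10:
  fixes q :: nat and ord X :: "letter list" and i j k h p q' :: nat
  assumes "q \<ge> 1"
    and "valid_order q ord"
    and "set X \<subseteq> alphabet q"
    and "primitive X"
    and "linking_pair ord X X (i, j)"
    and "linking_pair ord X X (k, h)"
    and "\<not> R_equiv X X (i, j) (k, h)"
    and "p > 0" and "q' > 0" and "p \<noteq> q'"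
    and "p \<ge> 3 \<or> q' \<ge> 3"
  shows "\<not> same_cyclic_word q (wpow (rotate i X) p @ wpow (rotate j X) q')
                               (wpow (rotate k X) p @ wpow (rotate h X) q')"
proof
  assume same: "same_cyclic_word q (wpow (rotate i X) p @ wpow (rotate j X) q')
                               (wpow (rotate k X) p @ wpow (rotate h X) q')"
  interpret pw X using assms(4) by unfold_locales
  have W: "wpow (rotate a X) e = seg (int a) (e * length X)" for a e
    by (simp add: rotate_seg wpow_seg)
  have rl: "rel (FI (seg (int i) (p * length X) @ seg (int j) (q' * length X)))
                (FI (seg (int k) (p * length X) @ seg (int h) (q' * length X)))"
    using FI_same[OF same] by (simp add: W)
  have lt: "i < length X" "j < length X" "k < length X" "h < length X"
    using assms(5,6) by (auto simp: linking_pair_def)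
  have R: "Req (int i, int j) (int k, int h)"
  proof (cases "q' < p")
    case True
    then have "p \<ge> 3" using assms(11) by linarith
    then show ?thesis using main_pq[of q' p "int i" "int j" "int k" "int h"] True assms(9) rl by simp
  next
    case False
    then have pq: "p < q'" using assms(10) by simp
    then have "q' \<ge> 3" using assms(11) by linarith
    moreover have "rel (FI (seg (int j) (q' * length X) @ seg (int i) (p * length X)))
                (FI (seg (int h) (q' * length X) @ seg (int k) (p * length X)))"
      using rel_trans[OF rel_trans[OF FI_swap rl] FI_swap] .
    ultimately have "Req (int j, int i) (int h, int k)"
      using main_pq[of p q' "int j" "int i" "int h" "int k"] pq assms(8) by simp
    then show ?thesis by (rule Req_swap)
  qed
  then have "R_equiv X X (i, j) (k, h)" using lt by (simp add: Req_def)
  then show False using assms(7) by simp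
qed


end
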